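(* Let $\widehat{\mathcal T}_\bullet$ be an admissible hierarchical mesh. Then the support of any $\widehat\beta\in\widehat{\mathcal H}_\bullet$ is the union of at most $2^d(p+1)^d$ elements of $\widehat{\mathcal T}_\bullet$. Moreover, for any $\widehat T\in\widehat{\mathcal T}_\bullet$ there are at most $2(p+1)^d$ functions $\widehat\beta'\in\widehat{\mathcal H}_\bullet$ with $|{\rm supp}(\widehat\beta')\cap\widehat T|>0$.
   Context: Parameter domain $\widehat\Omega=(0,1)^d$, $d\ge2$; degrees $p_1,\dots,p_d\ge1$, $p:=\max_ip_i$. For each $i$ let $\widehat{\mathcal K}^0_i=(t^0_{i,j})_{j=0}^{N^0_i+p_i}$ be a nondecreasing vector in $[0,1]$ whose first $p_i+1$ entries are $0$, last $p_i+1$ entries are $1$, interior knots of multiplicity $\le p_i$; $\widehat{\mathcal K}^{k+1}_i$ arises from $\widehat{\mathcal K}^k_i$ by inserting the midpoint of every nondegenerate knot span once. $\widehat{\mathcal B}^k$: tensor-product B-splines of degree $(p_1,\dots,p_d)$ for $\widehat{\mathcal K}^k$; $\widehat{\mathcal T}^k$: closed cells of level $k$ (nondegenerate boxes $\prod_i[t^k_{i,j_i-1},t^k_{i,j_i}]$). A hierarchical mesh is given by closed sets $[0,1]^d=\widehat\Omega^0_\bullet\supseteq\widehat\Omega^1_\bullet\supseteq\cdots$, each $\widehat\Omega^k_\bullet$ ($k\ge1$) a union of cells of $\widehat{\mathcal T}^{k-1}$, $\widehat\Omega^M_\bullet=\emptyset$ for some $M$; mesh $\widehat{\mathcal T}_\bullet=\bigcup_k\{\widehat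 T\in\widehat{\mathcal T}^k:\widehat T\subseteq\widehat\Omega^k_\bullet,\widehat T\not\subseteq\widehat\Omega^{k+1}_\bullet\}$ with ${\rm level}(\widehat T)=k$; hierarchical basis $\widehat{\mathcal H}_\bullet=\bigcup_k\{\widehat\beta\in\widehat{\mathcal B}^k:{\rm supp}\,\widehat\beta\subseteq\widehat\Omega^k_\bullet,{\rm supp}\,\widehat\beta\not\subseteq\widehat\Omega^{k+1}_\bullet\}$. Neighbors: $\mathcal N_\bullet(\widehat T)=\{\widehat T'\in\widehat{\mathcal T}_\bullet:\exists\widehat\beta\in\widehat{\mathcal H}_\bullet,\ \widehat T,\widehat T'\subseteq{\rm supp}\,\widehat\beta\}$. The mesh is admissible if $|{\rm level}(\widehat T)-{\rm level}(\widehat T')|\le1$ for all $\widehat T\in\widehat{\mathcal T}_\bullet$, $\widehat T'\in\mathcal N_\bullet(\widehat T)$. *)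

theory Defs
  imports "HOL-Analysis.Analysis"
begin

fun refine_knots :: "real list \<Rightarrow> real list" where
  "refine_knots (x # y # r) =
     (if x < y then x # (x + y) / 2 # refine_knots (y # r) else x # refine_knots (y # r))"
| "refine_knots r = r"

text \<open>Univariate B-splines by the Cox--de Boor recursion (convention 0/0 = 0,
  which is Isabelle's division by zero).\<close>
fun bspl :: "real list \<Rightarrow> nat \<Rightarrow> nat \<Rightarrow> real \<Rightarrow> real" where
  "bspl t 0 j x = (if t ! j \<le> x \<and> x < t ! (j + 1) then 1 else 0)"
| "bspl t (Suc q) j x =
     (x - t ! j) / (t ! (j + q + 1) - t ! j) * bspl t q j x
   + (t ! (j + q + 2) - x) / (t ! (j + q + 2) - t ! (j + 1)) * bspl t q (j + 1) x"

definition open_knot_vector :: "nat \<Rightarrow> real list \<Rightarrow> bool" where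
  "open_knot_vector q t \<longleftrightarrow>
     sorted t \<and> length t \<ge> 2 * (q + 1) \<and>
     take (q + 1) t = replicate (q + 1) 0 \<and>
     drop (length t - (q + 1)) t = replicate (q + 1) 1 \<and>
     (\<forall>x. 0 < x \<and> x < 1 \<longrightarrow> count_list t x \<le> q)"

definition lknots :: "('d \<Rightarrow> real list) \<Rightarrow> nat \<Rightarrow> 'd \<Rightarrow> real list" where
  "lknots K0 k i = (refine_knots ^^ k) (K0 i)"

definition tp_bspline :: "('d::finite \<Rightarrow> real list) \<Rightarrow> ('d \<Rightarrow> nat) \<Rightarrow> ('d \<Rightarrow> nat)
    \<Rightarrow> real^'d \<Rightarrow> real" where
  "tp_bspline t p j x = (\<Prod>i\<in>UNIV. bspl (t i) (p i) (j i) (x $ i))"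

definition bsplines_lv :: "('d::finite \<Rightarrow> real list) \<Rightarrow> ('d \<Rightarrow> nat) \<Rightarrow> nat
    \<Rightarrow> (real^'d \<Rightarrow> real) set" where
  "bsplines_lv K0 p k =
     {tp_bspline (lknots K0 k) p j | j. \<forall>i. j i + p i + 1 < length (lknots K0 k i)}"

definition cells_lv :: "('d::finite \<Rightarrow> real list) \<Rightarrow> nat \<Rightarrow> (real^'d) set set" where
  "cells_lv K0 k =
     {{x. \<forall>i. lknots K0 k i ! (j i - 1) \<le> x $ i \<and> x $ i \<le> lknots K0 k i ! (j i)} | j.
        \<forall>i. 0 < j i \<and> j i < length (lknots K0 k i) \<and>
            lknots K0 k i ! (j i - 1) < lknots K0 k i ! (j i)}"

definition supp :: "(real^'d::finite \<Rightarrow> real) \<Rightarrow> (real^'d) set" where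
  "supp f = closure {x. f x \<noteq> 0}"

definition hier_domains :: "('d::finite \<Rightarrow> real list) \<Rightarrow> (nat \<Rightarrow> (real^'d) set) \<Rightarrow> bool" where
  "hier_domains K0 Om \<longleftrightarrow>
     Om 0 = {x. \<forall>i. 0 \<le> x $ i \<and> x $ i \<le> 1} \<and>
     (\<forall>k. Om (Suc k) \<subseteq> Om k) \<and>
     (\<forall>k. \<exists>S \<subseteq> cells_lv K0 k. Om (Suc k) = \<Union>S) \<and>
     (\<exists>M. Om M = {})"

definition hmesh_lv :: "('d::finite \<Rightarrow> real list) \<Rightarrow> (nat \<Rightarrow> (real^'d) set)
    \<Rightarrow> (nat \<times> (real^'d) set) set" where
  "hmesh_lv K0 Om = {(k, T) | k T. T \<in> cells_lv K0 k \<and> T \<subseteq> Om k \<and> \<not> T \<subseteq> Om (Suc k)}"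

definition hmesh :: "('d::finite \<Rightarrow> real list) \<Rightarrow> (nat \<Rightarrow> (real^'d) set) \<Rightarrow> (real^'d) set set" where
  "hmesh K0 Om = snd ` hmesh_lv K0 Om"

definition hbasis :: "('d::finite \<Rightarrow> real list) \<Rightarrow> ('d \<Rightarrow> nat) \<Rightarrow> (nat \<Rightarrow> (real^'d) set)
    \<Rightarrow> (real^'d \<Rightarrow> real) set" where
  "hbasis K0 p Om = {\<beta> | \<beta> k. \<beta> \<in> bsplines_lv K0 p k \<and> supp \<beta> \<subseteq> Om k \<and> \<not> supp \<beta> \<subseteq> Om (Suc k)}"

definition admissible :: "('d::finite \<Rightarrow> real list) \<Rightarrow> ('d \<Rightarrow> nat) \<Rightarrow> (nat \<Rightarrow> (real^'d) set) \<Rightarrow> bool" where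
  "admissible K0 p Om \<longleftrightarrow>
     (\<forall>(k, T) \<in> hmesh_lv K0 Om. \<forall>(k', T') \<in> hmesh_lv K0 Om.
        (\<exists>\<beta> \<in> hbasis K0 p Om. T \<subseteq> supp \<beta> \<and> T' \<subseteq> supp \<beta>) \<longrightarrow> \<bar>int k - int k'\<bar> \<le> 1)"

end

theory Submission
  imports Defs
begin


definition span1 :: "real set \<Rightarrow> real \<Rightarrow> real \<Rightarrow> bool" where
  "span1 V a b \<longleftrightarrow> a \<in> V \<and> b \<in> V \<and> a < b \<and> (\<forall>v\<in>V. v \<le> a \<or> b \<le> v)"

definition mids :: "real set \<Rightarrow> real set" where
  "mids V = {(a + b) / 2 | a b. span1 V a b}"

lemma span_point:
  assumes "span1 V a b" "span1 V e f" "e \<le> z" "z \<le> f" "a < z" "z < b"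
  shows "a = e \<and> b = f"
proof -
  have "e \<le> a" using assms unfolding span1_def by force
  moreover have "b \<le> f" using assms unfolding span1_def by force
  moreover have "a \<le> e" using assms calculation unfolding span1_def by force
  moreover have "f \<le> b" using assms calculation unfolding span1_def by force
  ultimately show ?thesis by auto
qed

lemma span_uniq:
  assumes "span1 V a b" "span1 V e f" "max a e < min b f"
  shows "a = e \<and> b = f"
  using span_point[OF assms(1,2), of "(max a e + min b f)/2"] assms(3) by auto

lemma span_Cons:
  assumes "sorted (x # y # r)"
  shows "span1 (set (x # y # r)) a b \<longleftrightarrow> (x < y \<and> a = x \<and> b = y) \<or> span1 (set (y # r)) a b"
proof -
  have W: "\<forall>w\<in>set (y # r). y \<le> w" and xy: "x \<le> y" using assms by auto
  have S: "set (x # y # r) = insert x (set (y # r))" by simp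
  show ?thesis
  proof
    assume sp: "span1 (set (x # y # r)) a b"
    show "(x < y \<and> a = x \<and> b = y) \<or> span1 (set (y # r)) a b"
    proof (cases "a = x")
      case True
      have bW: "b \<in> set (y # r)" using sp True unfolding span1_def by auto
      have "y \<le> a \<or> b \<le> y" using sp unfolding span1_def by auto
      then show ?thesis
      proof
        assume "b \<le> y" then have "b = y" using W bW by force
        then show ?thesis using sp True unfolding span1_def by auto
      next
        assume "y \<le> a" then have "a = y" using True xy by auto
        then show ?thesis using sp bW unfolding span1_def by auto
      qed
    next
      case False
      then have "a \<in> set (y # r)" using sp unfolding span1_def by auto
      then have "b \<noteq> x" using W xy sp unfolding span1_def by force
      then show ?thesis using sp False unfolding span1_def by auto
    qed
  next
    assume "(x < y \<and> a = x \<and> b = y) \<or> span1 (set (y # r)) a b"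
    then show "span1 (set (x # y # r)) a b"
    proof
      assume "x < y \<and> a = x \<and> b = y" then show ?thesis using W unfolding span1_def by auto
    next
      assume sp: "span1 (set (y # r)) a b"
      then have "x \<le> a" using W xy unfolding span1_def by force
      then show ?thesis using sp unfolding span1_def by auto
    qed
  qed
qed

lemma mids_Cons:
  assumes "sorted (x # y # r)"
  shows "mids (set (x # y # r)) = (if x < y then {(x + y)/2} else {}) \<union> mids (set (y # r))"
proof -
  have "mids (set (x # y # r)) = {(a + b) / 2 | a b. (x < y \<and> a = x \<and> b = y) \<or> span1 (set (y # r)) a b}"
    unfolding mids_def using span_Cons[OF assms] by presburger
  also have "\<dots> = (if x < y then {(x + y)/2} else {}) \<union> mids (set (y # r))"
    unfolding mids_def by (auto; force)
  finally show ?thesis .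
qed

lemma mids_short: "length t \<le> 1 \<Longrightarrow> mids (set t) = {}"
  unfolding mids_def span1_def by (cases t) auto

lemma set_refine: "sorted t \<Longrightarrow> set (refine_knots t) = set t \<union> mids (set t)"
proof (induction t rule: refine_knots.induct)
  case (1 x y r)
  then have s: "sorted (y # r)" by simp
  have IH: "set (refine_knots (y # r)) = set (y # r) \<union> mids (set (y # r))" by (cases "x < y") (use 1 s in auto)
  have M: "mids (set (x # y # r)) = (if x < y then {(x + y)/2} else {}) \<union> mids (set (y # r))"
    using mids_Cons[OF "1.prems"] .
  show ?case unfolding M using IH by auto
next
  case ("2_1") then show ?case using mids_short[of "[]"] by simp
next
  case ("2_2" v) then show ?case using mids_short[of "[v]"] by simp
qed

lemma mids_ge: "span1 V a b \<Longrightarrow> a < (a+b)/2 \<and> (a+b)/2 < b"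
  unfolding span1_def by auto

lemma refine_hd: "refine_knots (y # r) = y # tl (refine_knots (y # r))"
  by (cases r) auto

lemma sorted_refine: "sorted t \<Longrightarrow> sorted (refine_knots t)"
proof (induction t rule: refine_knots.induct)
  case (1 x y r)
  then have s: "sorted (y # r)" by simp
  have ge: "\<forall>z \<in> set (refine_knots (y # r)). y \<le> z"
  proof
    fix z assume "z \<in> set (refine_knots (y # r))"
    then have "z \<in> set (y # r) \<or> z \<in> mids (set (y # r))" using set_refine[OF s] by auto
    then show "y \<le> z"
    proof
      assume "z \<in> set (y # r)" then show ?thesis using s by auto
    next
      assume "z \<in> mids (set (y # r))"
      then obtain a b where "span1 (set (y#r)) a b" "z = (a+b)/2" unfolding mids_def by auto
      then show ?thesis using s unfolding span1_def by auto
    qed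
  qed
  have "x \<le> y" using 1 by simp
  then show ?case using 1 s ge by auto
qed auto



lemma refine_span_sub:
  assumes fin: "finite V" and sp: "span1 (V \<union> mids V) c d"
  shows "\<exists>a b. span1 V a b \<and> a \<le> c \<and> d \<le> b"
proof -
  have cV: "c \<in> V \<union> mids V" and dV: "d \<in> V \<union> mids V" and cd: "c < d"
    using sp unfolding span1_def by auto
  have ex1: "\<exists>v\<in>V. v \<le> c"
  proof (cases "c \<in> V")
    case False then obtain e f where "span1 V e f" "c = (e+f)/2" using cV unfolding mids_def by auto
    then show ?thesis unfolding span1_def by (intro bexI[of _ e]) auto
  qed auto
  have ex2: "\<exists>v\<in>V. c < v"
  proof (cases "d \<in> V")
    case False then obtain e f where "span1 V e f" "d = (e+f)/2" using dV unfolding mids_def by auto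
    then show ?thesis using cd unfolding span1_def by (intro bexI[of _ f]) auto
  qed (use cd in auto)
  define a where "a = Max {v\<in>V. v \<le> c}"
  define b where "b = Min {v\<in>V. c < v}"
  have fa: "finite {v\<in>V. v \<le> c}" "{v\<in>V. v \<le> c} \<noteq> {}" using fin ex1 by auto
  have fb: "finite {v\<in>V. c < v}" "{v\<in>V. c < v} \<noteq> {}" using fin ex2 by auto
  have aV: "a \<in> V" "a \<le> c" using Max_in[OF fa] unfolding a_def by auto
  have bV: "b \<in> V" "c < b" using Min_in[OF fb] unfolding b_def by auto
  have "\<forall>v\<in>V. v \<le> a \<or> b \<le> v"
  proof
    fix v assume "v \<in> V"
    show "v \<le> a \<or> b \<le> v"
    proof (cases "v \<le> c")
      case True then show ?thesis using Max_ge[OF fa(1)] \<open>v \<in> V\<close> unfolding a_def by auto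
    next
      case False then show ?thesis using Min_le[OF fb(1)] \<open>v \<in> V\<close> unfolding b_def by auto
    qed
  qed
  then have "span1 V a b" using aV bV unfolding span1_def by auto
  moreover have "d \<le> b"
  proof -
    have "b \<in> V \<union> mids V" using bV by auto
    then show ?thesis using sp bV(2) unfolding span1_def by force
  qed
  ultimately show ?thesis using aV by auto
qed

lemma refine_children:
  assumes sp: "span1 V a b"
  shows "span1 (V \<union> mids V) a ((a+b)/2) \<and> span1 (V \<union> mids V) ((a+b)/2) b"
proof -
  let ?m = "(a+b)/2"
  have key: "\<forall>v\<in>V \<union> mids V. v \<le> a \<or> v = ?m \<or> b \<le> v"
  proof
    fix v assume "v \<in> V \<union> mids V"
    then show "v \<le> a \<or> v = ?m \<or> b \<le> v"
    proof
      assume "v \<in> V" then show ?thesis using sp unfolding span1_def by auto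
    next
      assume "v \<in> mids V"
      then obtain e f where ef: "span1 V e f" "v = (e+f)/2" unfolding mids_def by auto
      show ?thesis
      proof (cases "max a e < min b f")
        case True then have "a = e \<and> b = f" using span_uniq[OF sp ef(1)] by auto
        then show ?thesis using ef by auto
      next
        case False then show ?thesis using ef sp unfolding span1_def by auto
      qed
    qed
  qed
  have "?m \<in> mids V" unfolding mids_def using sp by auto
  moreover have "\<forall>v\<in>V \<union> mids V. v \<le> a \<or> ?m \<le> v"
  proof
    fix v assume "v \<in> V \<union> mids V"
    then have "v \<le> a \<or> v = ?m \<or> b \<le> v" using key by blast
    then show "v \<le> a \<or> ?m \<le> v" using mids_ge[OF sp] by auto
  qed
  moreover have "\<forall>v\<in>V \<union> mids V. v \<le> ?m \<or> b \<le> v"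
  proof
    fix v assume "v \<in> V \<union> mids V"
    then have "v \<le> a \<or> v = ?m \<or> b \<le> v" using key by blast
    then show "v \<le> ?m \<or> b \<le> v" using mids_ge[OF sp] by auto
  qed
  ultimately show ?thesis using sp mids_ge[OF sp] unfolding span1_def by auto
qed

lemma span_cover:
  assumes fin: "finite V" and "lo \<in> V" "hi \<in> V" "lo < hi" "lo \<le> x" "x \<le> hi"
  shows "\<exists>c d. span1 V c d \<and> lo \<le> c \<and> c \<le> x \<and> x \<le> d \<and> d \<le> hi"
proof -
  define c where "c = Max {v\<in>V. v \<le> x \<and> v < hi}"
  have fa: "finite {v\<in>V. v \<le> x \<and> v < hi}" "{v\<in>V. v \<le> x \<and> v < hi} \<noteq> {}" using fin assms by auto
  have cV: "c \<in> V" "c \<le> x" "c < hi" "lo \<le> c"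
    using Max_in[OF fa] Max_ge[OF fa(1), of lo] assms unfolding c_def by auto
  define d where "d = Min {v\<in>V. c < v}"
  have fb: "finite {v\<in>V. c < v}" "{v\<in>V. c < v} \<noteq> {}" using fin assms cV by auto
  have dV: "d \<in> V" "c < d" "d \<le> hi" using Min_in[OF fb] Min_le[OF fb(1), of hi] assms cV unfolding d_def by auto
  have "\<forall>v\<in>V. v \<le> c \<or> d \<le> v"
  proof
    fix v assume "v \<in> V"
    show "v \<le> c \<or> d \<le> v"
    proof (cases "c < v")
      case True then show ?thesis using Min_le[OF fb(1)] \<open>v \<in> V\<close> unfolding d_def by auto
    qed auto
  qed
  then have sp: "span1 V c d" using cV dV unfolding span1_def by auto
  have "x \<le> d"
  proof (rule ccontr)
    assume "\<not> x \<le> d"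
    then have "d \<in> {v\<in>V. v \<le> x \<and> v < hi} \<or> d = hi" using dV by auto
    then show False
    proof
      assume "d \<in> {v\<in>V. v \<le> x \<and> v < hi}"
      then have "d \<le> c" using Max_ge[OF fa(1), of d] unfolding c_def by auto
      then show False using dV by auto
    next
      assume "d = hi" then show False using \<open>\<not> x \<le> d\<close> assms by auto
    qed
  qed
  then show ?thesis using sp cV dV by auto
qed

definition nxt :: "real set \<Rightarrow> real \<Rightarrow> real" where
  "nxt V c = Min {v\<in>V. c < v}"

lemma span_nxt:
  assumes fin: "finite V" and sp: "span1 V c d"
  shows "d = nxt V c"
proof -
  have fb: "finite {v\<in>V. c < v}" "d \<in> {v\<in>V. c < v}" using fin sp unfolding span1_def by auto
  have "\<forall>v\<in>{v\<in>V. c < v}. d \<le> v" using sp unfolding span1_def by auto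
  then show ?thesis unfolding nxt_def using fb
    by (metis (no_types, lifting) Min_eqI)
qed

lemma card_refine_interval:
  assumes fin: "finite V" and lo: "lo \<in> V"
  shows "card ((V \<union> mids V) \<inter> {lo..<hi}) \<le> 2 * card (V \<inter> {lo..<hi})"
proof -
  let ?A = "V \<inter> {lo..<hi}"
  have "(V \<union> mids V) \<inter> {lo..<hi} \<subseteq> ?A \<union> (\<lambda>a. (a + nxt V a)/2) ` ?A"
  proof
    fix v assume v: "v \<in> (V \<union> mids V) \<inter> {lo..<hi}"
    show "v \<in> ?A \<union> (\<lambda>a. (a + nxt V a)/2) ` ?A"
    proof (cases "v \<in> V")
      case False
      then obtain a b where ab: "span1 V a b" "v = (a+b)/2" using v unfolding mids_def by auto
      have "b = nxt V a" using span_nxt[OF fin ab(1)] .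
      moreover have "lo \<le> a" using ab lo v unfolding span1_def by force
      moreover have "a < hi" using ab v unfolding span1_def by auto
      ultimately show ?thesis using ab unfolding span1_def by auto
    qed (use v in auto)
  qed
  then have "card ((V \<union> mids V) \<inter> {lo..<hi}) \<le> card (?A \<union> (\<lambda>a. (a + nxt V a)/2) ` ?A)"
    by (intro card_mono) (use fin in auto)
  also have "\<dots> \<le> card ?A + card ((\<lambda>a. (a + nxt V a)/2) ` ?A)" by (rule card_Un_le)
  also have "\<dots> \<le> card ?A + card ?A" using card_image_le[of ?A] fin by auto
  finally show ?thesis by simp
qed

lemma span_index:
  assumes s: "sorted t"
  shows "span1 (set t) a b \<longleftrightarrow> (\<exists>j. 0 < j \<and> j < length t \<and> t!(j-1) < t!j \<and> a = t!(j-1) \<and> b = t!j)"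
proof
  assume "\<exists>j. 0 < j \<and> j < length t \<and> t!(j-1) < t!j \<and> a = t!(j-1) \<and> b = t!j"
  then obtain j where j: "0 < j" "j < length t" "t!(j-1) < t!j" "a = t!(j-1)" "b = t!j" by blast
  have "\<forall>v\<in>set t. v \<le> a \<or> b \<le> v"
  proof
    fix v assume "v \<in> set t"
    then obtain m where m: "m < length t" "v = t!m" by (auto simp: in_set_conv_nth)
    show "v \<le> a \<or> b \<le> v"
    proof (cases "m \<le> j - 1")
      case True then show ?thesis using sorted_nth_mono[OF s True] j m by auto
    next
      case False then have "j \<le> m" by auto
      then show ?thesis using sorted_nth_mono[OF s _ m(1)] j m by auto
    qed
  qed
  then show "span1 (set t) a b" using j unfolding span1_def by auto
next
  assume sp: "span1 (set t) a b"
  define M where "M = {m. m < length t \<and> t!m = a}"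
  have fM: "finite M" "M \<noteq> {}" using sp unfolding M_def span1_def by (auto simp: in_set_conv_nth)
  define m where "m = Max M"
  have mM: "m < length t" "t!m = a" using Max_in[OF fM] unfolding m_def M_def by auto
  obtain n where n: "n < length t" "t!n = b" using sp unfolding span1_def by (auto simp: in_set_conv_nth)
  have "m < n"
  proof (rule ccontr)
    assume "\<not> m < n" then have "t!n \<le> t!m" using sorted_nth_mono[OF s _ mM(1)] by auto
    then show False using sp mM n unfolding span1_def by auto
  qed
  then have m1: "m + 1 < length t" using n by auto
  have "t!(m+1) \<ge> a" using sorted_nth_mono[OF s _ m1] mM by auto
  moreover have "t!(m+1) \<noteq> a"
  proof
    assume "t!(m+1) = a" then have "m+1 \<in> M" using m1 unfolding M_def by auto
    then show False using Max_ge[OF fM(1)] unfolding m_def by fastforce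
  qed
  ultimately have gt: "t!(m+1) > a" by auto
  have le: "t!(m+1) \<le> b" using sorted_nth_mono[OF s _ n(1), of "m+1"] \<open>m < n\<close> n by auto
  have "t!(m+1) \<in> set t" using m1 by auto
  then have "t!(m+1) \<ge> b" using sp gt unfolding span1_def by force
  then have "t!(m+1) = b" using le by auto
  then show "\<exists>j. 0 < j \<and> j < length t \<and> t!(j-1) < t!j \<and> a = t!(j-1) \<and> b = t!j"
    using m1 mM gt by (intro exI[of _ "m+1"]) auto
qed

lemma card_knots_interval:
  assumes s: "sorted t" and j: "j + q + 1 < length t"
  shows "card (set t \<inter> {t!j..<t!(j+q+1)}) \<le> q + 1"
proof -
  have "set t \<inter> {t!j..<t!(j+q+1)} \<subseteq> (\<lambda>m. t!m) ` {j..j+q}"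
  proof
    fix v assume v: "v \<in> set t \<inter> {t!j..<t!(j+q+1)}"
    then obtain m where m: "m < length t" "v = t!m" by (auto simp: in_set_conv_nth)
    show "v \<in> (\<lambda>m. t!m) ` {j..j+q}"
    proof (cases "m < j")
      case True then have "t!m \<le> t!j" using sorted_nth_mono[OF s _ ] j by auto
      then have "v = t!j" using v m by auto
      then show ?thesis by auto
    next
      case False
      have "m \<le> j + q"
      proof (rule ccontr)
        assume "\<not> m \<le> j + q"
        then have "t!(j+q+1) \<le> t!m" using sorted_nth_mono[OF s _ m(1)] by auto
        then show False using v m by auto
      qed
      then show ?thesis using False m by auto
    qed
  qed
  then have "card (set t \<inter> {t!j..<t!(j+q+1)}) \<le> card ((\<lambda>m. t!m) ` {j..j+q})"
    by (intro card_mono) auto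
  also have "\<dots> \<le> card {j..j+q}" by (rule card_image_le) auto
  finally show ?thesis by simp
qed

lemma card_overlap_index:
  assumes s: "sorted t" and sp: "span1 (set t) a' b'" and "a' \<le> a" "b \<le> b'"
  shows "finite {m. m + q + 1 < length t \<and> t!m < b \<and> a < t!(m+q+1)}"
    "card {m. m + q + 1 < length t \<and> t!m < b \<and> a < t!(m+q+1)} \<le> q + 1"
proof -
  obtain j where j: "0 < j" "j < length t" "a' = t!(j-1)" "b' = t!j"
    using sp span_index[OF s] by blast
  have sub: "{m. m + q + 1 < length t \<and> t!m < b \<and> a < t!(m+q+1)} \<subseteq> {j - 1 - q..<j}"
  proof
    fix m assume m: "m \<in> {m. m + q + 1 < length t \<and> t!m < b \<and> a < t!(m+q+1)}"
    have "m < j"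
    proof (rule ccontr)
      assume "\<not> m < j" then have "t!j \<le> t!m" using sorted_nth_mono[OF s, of j m] m by auto
      then show False using m j assms by auto
    qed
    moreover have "j - 1 < m + q + 1"
    proof (rule ccontr)
      assume "\<not> j - 1 < m + q + 1" then have "t!(m+q+1) \<le> t!(j-1)" using sorted_nth_mono[OF s, of "m+q+1" "j-1"] j by auto
      then show False using m j assms by auto
    qed
    ultimately show "m \<in> {j - 1 - q..<j}" by auto
  qed
  then show "finite {m. m + q + 1 < length t \<and> t!m < b \<and> a < t!(m+q+1)}" using finite_subset by blast
  have "card {m. m + q + 1 < length t \<and> t!m < b \<and> a < t!(m+q+1)} \<le> card {j - 1 - q..<j}"
    using sub by (intro card_mono) auto
  then show "card {m. m + q + 1 < length t \<and> t!m < b \<and> a < t!(m+q+1)} \<le> q + 1" by auto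
qed



lemma bspl_basic:
  assumes s: "sorted t"
  shows "j + q + 1 < length t \<Longrightarrow> 0 \<le> bspl t q j x \<and> (bspl t q j x \<noteq> 0 \<longrightarrow> t!j \<le> x \<and> x < t!(j+q+1))"
proof (induction q arbitrary: j)
  case 0 then show ?case by auto
next
  case (Suc q)
  have l1: "j + q + 1 < length t" and l2: "(j+1) + q + 1 < length t" using Suc.prems by auto
  note IH1 = Suc.IH[OF l1] and IH2 = Suc.IH[OF l2]
  have m1: "t!j \<le> t!(j+1)" "t!(j+q+1) \<le> t!(j+q+2)" using sorted_nth_mono[OF s] Suc.prems by auto
  let ?A = "(x - t ! j) / (t ! (j + q + 1) - t ! j) * bspl t q j x"
  let ?B = "(t ! (j + q + 2) - x) / (t ! (j + q + 2) - t ! (j + 1)) * bspl t q (j + 1) x"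
  have A: "0 \<le> ?A \<and> (?A \<noteq> 0 \<longrightarrow> t!j \<le> x \<and> x < t!(j+q+1))"
  proof (cases "bspl t q j x = 0")
    case False
    then have "t!j \<le> x" "x < t!(j+q+1)" using IH1 by auto
    then show ?thesis using IH1 by auto
  qed auto
  have B: "0 \<le> ?B \<and> (?B \<noteq> 0 \<longrightarrow> t!(j+1) \<le> x \<and> x < t!(j+q+2))"
  proof (cases "bspl t q (j+1) x = 0")
    case False
    then have "t!(j+1) \<le> x" "x < t!(j+q+2)" using IH2 by auto
    then show ?thesis using IH2 by auto
  qed auto
  have eq: "bspl t (Suc q) j x = ?A + ?B" by (simp add: add.commute add.left_commute)
  show ?case unfolding eq using A B m1 by auto
qed

lemma bspl_pos:
  assumes s: "sorted t"
  shows "j + q + 1 < length t \<Longrightarrow> t!j < x \<Longrightarrow> x < t!(j+q+1) \<Longrightarrow> x \<notin> set t \<Longrightarrow> 0 < bspl t q j x"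
proof (induction q arbitrary: j)
  case 0 then show ?case by auto
next
  case (Suc q)
  have l1: "j + q + 1 < length t" and l2: "(j+1) + q + 1 < length t" using Suc.prems by auto
  have m1: "t!j \<le> t!(j+1)" "t!(j+q+1) \<le> t!(j+q+2)" "t!(j+1) \<le> t!(j+q+1)" using sorted_nth_mono[OF s] Suc.prems by auto
  let ?A = "(x - t ! j) / (t ! (j + q + 1) - t ! j) * bspl t q j x"
  let ?B = "(t ! (j + q + 2) - x) / (t ! (j + q + 2) - t ! (j + 1)) * bspl t q (j + 1) x"
  have A: "0 \<le> ?A"
  proof (cases "bspl t q j x = 0")
    case False
    then have "t!j \<le> x" "x < t!(j+q+1)" using bspl_basic[OF s l1] by auto
    then show ?thesis using bspl_basic[OF s l1] by auto
  qed auto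
  have B: "0 \<le> ?B"
  proof (cases "bspl t q (j+1) x = 0")
    case False
    then have "t!(j+1) \<le> x" "x < t!(j+q+2)" using bspl_basic[OF s l2] by auto
    then show ?thesis using bspl_basic[OF s l2] by auto
  qed auto
  have eq: "bspl t (Suc q) j x = ?A + ?B" by (simp add: add.commute add.left_commute)
  have xne: "x \<noteq> t!(j+q+1)" using Suc.prems l1 by auto
  show ?case
  proof (cases "x < t!(j+q+1)")
    case True
    then have "0 < bspl t q j x" using Suc.IH[OF l1] Suc.prems by auto
    moreover have "0 < (x - t ! j) / (t ! (j + q + 1) - t ! j)" using True Suc.prems by auto
    ultimately have "0 < ?A" using mult_pos_pos by blast
    then show ?thesis unfolding eq using B by auto
  next
    case False
    then have x1: "t!(j+1) < x" using xne m1 by auto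
    then have "0 < bspl t q (j+1) x" using Suc.IH[OF l2] Suc.prems by auto
    moreover have "0 < (t ! (j + q + 2) - x) / (t ! (j + q + 2) - t ! (j + 1))" using x1 Suc.prems by auto
    ultimately have "0 < ?B" using mult_pos_pos by blast
    then show ?thesis unfolding eq using A by auto
  qed
qed



definition rbox :: "('d::finite \<Rightarrow> real) \<Rightarrow> ('d \<Rightarrow> real) \<Rightarrow> (real^'d) set" where
  "rbox a b = {x. \<forall>i. a i \<le> x$i \<and> x$i \<le> b i}"

lemma closed_rbox: "closed (rbox a b)"
  unfolding rbox_def
  by (intro closed_Collect_all closed_Collect_conj closed_Collect_le continuous_intros continuous_on_component)

lemma rbox_Int: "rbox a b \<inter> rbox c d = rbox (\<lambda>i. max (a i) (c i)) (\<lambda>i. min (b i) (d i))"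
  unfolding rbox_def by auto

lemma rbox_sub:
  assumes "\<forall>i. c i \<le> d i" "rbox c d \<subseteq> rbox a b"
  shows "a i \<le> c i \<and> d i \<le> b i"
proof -
  have "(\<chi> i. c i) \<in> rbox c d" "(\<chi> i. d i) \<in> rbox c d" using assms unfolding rbox_def by auto
  then have "(\<chi> i. c i) \<in> rbox a b" "(\<chi> i. d i) \<in> rbox a b" using assms by auto
  then show ?thesis unfolding rbox_def by auto
qed

lemma rbox_eq_imp:
  assumes lt: "\<forall>i. a i < b i" and eq: "rbox a b = rbox c d"
  shows "a = c \<and> b = d"
proof -
  have ab: "\<forall>i. a i \<le> b i" using lt by (auto intro: less_imp_le)
  have "(\<chi> i. a i) \<in> rbox a b" using ab unfolding rbox_def by auto
  then have "(\<chi> i. a i) \<in> rbox c d" using eq by simp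
  then have "\<forall>i. c i \<le> a i \<and> a i \<le> d i" unfolding rbox_def by simp
  then have cd: "\<forall>i. c i \<le> d i" by (meson order_trans)
  have 1: "\<forall>i. a i \<le> c i \<and> d i \<le> b i" using rbox_sub[OF cd] eq by blast
  have 2: "\<forall>i. c i \<le> a i \<and> b i \<le> d i" using rbox_sub[OF ab] eq by blast
  show ?thesis using 1 2 by (auto intro!: ext intro: antisym)
qed

lemma hyp_null: "{x::real^'d::finite. x$i = c} \<in> null_sets lborel"
proof -
  have "negligible {x::real^'d. x \<bullet> axis i 1 = c}"
    by (rule negligible_standard_hyperplane) (simp add: Basis_vec_def, blast)
  hence "negligible {x::real^'d. x$i = c}" by (simp add: cart_eq_inner_axis)
  hence 1: "{x::real^'d. x$i = c} \<in> null_sets lebesgue" by (simp add: negligible_iff_null_sets)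
  have 2: "{x::real^'d. x$i = c} \<in> sets lborel"
    using borel_closed[of "{x::real^'d. x$i = c}"] by (simp add: closed_Collect_eq continuous_on_component)
  show ?thesis
    using 1 2 null_sets_completion_iff by blast
qed

lemma null_hyps:
  fixes S :: "(real^'d::finite) set"
  assumes "finite I" "S \<subseteq> (\<Union>ic\<in>I. {x::real^'d. x$(fst ic) = snd ic})"
  shows "emeasure lborel S = 0"
proof -
  have N: "(\<Union>ic\<in>I. {x::real^'d. x$(fst ic) = snd ic}) \<in> null_sets lborel"
    using assms(1) by (intro null_sets_UN') (auto intro: countable_finite hyp_null)
  show ?thesis
  proof (cases "S \<in> sets lborel")
    case True then show ?thesis using null_sets_subset[OF N True assms(2)] by auto
  next
    case False then show ?thesis by (rule emeasure_notin_sets)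
  qed
qed

lemma null_rbox:
  fixes S :: "(real^'d::finite) set"
  assumes "S \<subseteq> rbox c d" "d i \<le> c i"
  shows "emeasure lborel S = 0"
proof -
  have "S \<subseteq> (\<Union>ic\<in>{(i, c i)}. {x::real^'d. x$(fst ic) = snd ic})"
  proof
    fix x assume "x \<in> S"
    then have "c i \<le> x$i" "x$i \<le> d i" using assms unfolding rbox_def by auto
    then show "x \<in> (\<Union>ic\<in>{(i, c i)}. {x::real^'d. x$(fst ic) = snd ic})" using assms by auto
  qed
  then show ?thesis by (intro null_hyps[of "{(i, c i)}"]) auto
qed

lemma approx_point:
  fixes a b x e :: real
  assumes "a < b" "a \<le> x" "x \<le> b" "finite F" "0 < e"
  shows "\<exists>y. a < y \<and> y < b \<and> y \<notin> F \<and> \<bar>y - x\<bar> < e"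
proof -
  have "max a (x - e) < min b (x + e)" using assms by auto
  then have "infinite {max a (x - e)<..<min b (x + e)}" by (rule infinite_Ioo)
  then have "{max a (x - e)<..<min b (x + e)} - F \<noteq> {}" using assms(4)
    by (metis finite_subset Diff_eq_empty_iff)
  then obtain y where "y \<in> {max a (x - e)<..<min b (x + e)} - F" by blast
  then show ?thesis by (intro exI[of _ y]) auto
qed

lemma tp_nonzero_iff: "tp_bspline t p j x \<noteq> 0 \<longleftrightarrow> (\<forall>i. bspl (t i) (p i) (j i) (x$i) \<noteq> 0)"
  unfolding tp_bspline_def by (simp del: bspl.simps)

lemma supp_tp:
  fixes t :: "'d::finite \<Rightarrow> real list"
  assumes s: "\<forall>i. sorted (t i)" and l: "\<forall>i. j i + p i + 1 < length (t i)"
  shows "supp (tp_bspline t p j) =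
     (if \<forall>i. t i!(j i) < t i!(j i + p i + 1) then rbox (\<lambda>i. t i!(j i)) (\<lambda>i. t i!(j i + p i + 1)) else {})"
proof -
  let ?lo = "\<lambda>i. t i!(j i)" and ?hi = "\<lambda>i. t i!(j i + p i + 1)"
  let ?G = "{x. tp_bspline t p j x \<noteq> 0}"
  have sub: "?G \<subseteq> rbox ?lo ?hi"
  proof
    fix x assume "x \<in> ?G"
    then have "\<forall>i. bspl (t i) (p i) (j i) (x$i) \<noteq> 0" using tp_nonzero_iff[of t p j x] by simp
    then show "x \<in> rbox ?lo ?hi" using bspl_basic[OF s[rule_format] l[rule_format]] unfolding rbox_def
      by (auto intro: less_imp_le)
  qed
  show ?thesis
  proof (cases "\<forall>i. ?lo i < ?hi i")
    case True
    have "closure ?G \<subseteq> rbox ?lo ?hi" using sub closed_rbox by (rule closure_minimal)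
    moreover have "rbox ?lo ?hi \<subseteq> closure ?G"
    proof
      fix x assume x: "x \<in> rbox ?lo ?hi"
      show "x \<in> closure ?G"
        unfolding closure_approachable
      proof (intro allI impI)
        fix e :: real assume e: "0 < e"
        have ce: "0 < e / real CARD('d)" using e by auto
        have "\<forall>i. \<exists>y. ?lo i < y \<and> y < ?hi i \<and> y \<notin> set (t i) \<and> \<bar>y - x$i\<bar> < e / real CARD('d)"
          using approx_point[OF _ _ _ _ ce] True x unfolding rbox_def by auto
        then obtain y where y: "\<And>i. ?lo i < y i \<and> y i < ?hi i \<and> y i \<notin> set (t i) \<and> \<bar>y i - x$i\<bar> < e / real CARD('d)"
          by metis
        let ?y = "\<chi> i. y i"
        have pos: "\<And>i. 0 < bspl (t i) (p i) (j i) (y i)"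
          using bspl_pos[OF s[rule_format] l[rule_format]] y by blast
        have "\<forall>i. bspl (t i) (p i) (j i) (?y$i) \<noteq> 0"
        proof
          fix i show "bspl (t i) (p i) (j i) (?y$i) \<noteq> 0" using pos[of i] by simp
        qed
        then have "tp_bspline t p j ?y \<noteq> 0" using tp_nonzero_iff[of t p j ?y] by blast
        moreover have "dist ?y x < e"
        proof -
          have "dist ?y x = norm (?y - x)" by (simp add: dist_norm)
          also have "\<dots> \<le> (\<Sum>i\<in>UNIV. \<bar>(?y - x)$i\<bar>)" by (rule norm_le_l1_cart)
          also have "\<dots> < (\<Sum>i\<in>(UNIV::'d set). e / real CARD('d))"
            by (rule sum_strict_mono) (use y in auto)
          also have "\<dots> = e" by simp
          finally show ?thesis .
        qed
        ultimately show "\<exists>y\<in>?G. dist y x < e" by blast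
      qed
    qed
    ultimately show ?thesis using True unfolding supp_def by auto
  next
    case False
    then obtain i where "\<not> ?lo i < ?hi i" by auto
    then have "\<forall>x. bspl (t i) (p i) (j i) (x$i) = 0" using bspl_basic[OF s[rule_format] l[rule_format]]
      by (metis less_le_trans not_less)
    then have "?G = {}" using tp_nonzero_iff[of t p j] by blast
    then show ?thesis using False unfolding supp_def by auto
  qed
qed



lemma lknots_Suc: "lknots K0 (Suc k) i = refine_knots (lknots K0 k i)"
  unfolding lknots_def by simp

lemma sorted_lknots: "(\<forall>i. sorted (K0 i)) \<Longrightarrow> sorted (lknots K0 k i)"
  by (induction k) (auto simp: lknots_Suc sorted_refine, simp add: lknots_def)

lemma set_lknots_Suc: "(\<forall>i. sorted (K0 i)) \<Longrightarrow>
  set (lknots K0 (Suc k) i) = set (lknots K0 k i) \<union> mids (set (lknots K0 k i))"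
  by (simp add: lknots_Suc set_refine sorted_lknots)

definition cell :: "('d::finite \<Rightarrow> real list) \<Rightarrow> nat \<Rightarrow> ('d \<Rightarrow> real) \<Rightarrow> ('d \<Rightarrow> real) \<Rightarrow> bool" where
  "cell K0 k a b \<longleftrightarrow> (\<forall>i. span1 (set (lknots K0 k i)) (a i) (b i))"

lemma cell_lt: "cell K0 k a b \<Longrightarrow> a i < b i"
  unfolding cell_def span1_def by auto

lemma cells_lv_iff:
  assumes s: "\<forall>i. sorted (K0 i)"
  shows "C \<in> cells_lv K0 k \<longleftrightarrow> (\<exists>a b. cell K0 k a b \<and> C = rbox a b)"
proof
  assume "C \<in> cells_lv K0 k"
  then obtain j where j: "\<forall>i. 0 < j i \<and> j i < length (lknots K0 k i) \<and>
            lknots K0 k i ! (j i - 1) < lknots K0 k i ! (j i)"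
    and C: "C = {x. \<forall>i. lknots K0 k i ! (j i - 1) \<le> x $ i \<and> x $ i \<le> lknots K0 k i ! (j i)}"
    unfolding cells_lv_def by blast
  have "cell K0 k (\<lambda>i. lknots K0 k i ! (j i - 1)) (\<lambda>i. lknots K0 k i ! (j i))"
    unfolding cell_def using span_index[OF sorted_lknots[OF s]] j by blast
  moreover have "C = rbox (\<lambda>i. lknots K0 k i ! (j i - 1)) (\<lambda>i. lknots K0 k i ! (j i))"
    unfolding C rbox_def by simp
  ultimately show "\<exists>a b. cell K0 k a b \<and> C = rbox a b" by blast
next
  assume "\<exists>a b. cell K0 k a b \<and> C = rbox a b"
  then obtain a b where ab: "cell K0 k a b" "C = rbox a b" by blast
  have "\<forall>i. \<exists>j. 0 < j \<and> j < length (lknots K0 k i) \<and> lknots K0 k i ! (j - 1) < lknots K0 k i ! j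
       \<and> a i = lknots K0 k i ! (j - 1) \<and> b i = lknots K0 k i ! j"
    using ab(1) span_index[OF sorted_lknots[OF s]] unfolding cell_def by blast
  then obtain j where j: "\<And>i. 0 < j i \<and> j i < length (lknots K0 k i) \<and> lknots K0 k i ! (j i - 1) < lknots K0 k i ! (j i)
       \<and> a i = lknots K0 k i ! (j i - 1) \<and> b i = lknots K0 k i ! (j i)" by metis
  have "C = {x. \<forall>i. lknots K0 k i ! (j i - 1) \<le> x $ i \<and> x $ i \<le> lknots K0 k i ! (j i)}"
    unfolding ab(2) rbox_def using j by simp
  then show "C \<in> cells_lv K0 k" unfolding cells_lv_def using j by blast
qed

lemma cell_center:
  assumes "cell K0 k a b" "cell K0 k e f" "\<forall>i. a i < z i \<and> z i < b i" "\<forall>i. e i \<le> z i \<and> z i \<le> f i"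
  shows "a = e \<and> b = f"
proof -
  have "\<forall>i. a i = e i \<and> b i = f i"
    using span_point assms unfolding cell_def by metis
  then show ?thesis by auto
qed

lemma cell_children:
  assumes s: "\<forall>i. sorted (K0 i)" and c: "cell K0 k a b" and x: "x \<in> rbox a b"
  shows "\<exists>c d. cell K0 (Suc k) c d \<and> x \<in> rbox c d \<and> (\<forall>i. a i \<le> c i \<and> d i \<le> b i)"
proof -
  let ?m = "\<lambda>i. (a i + b i) / 2"
  define c where "c = (\<lambda>i. if x$i \<le> ?m i then a i else ?m i)"
  define d where "d = (\<lambda>i. if x$i \<le> ?m i then ?m i else b i)"
  have "cell K0 (Suc k) c d"
    unfolding cell_def c_def d_def set_lknots_Suc[OF s]
    using refine_children c unfolding cell_def by auto
  moreover have "x \<in> rbox c d" using x unfolding rbox_def c_def d_def by auto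
  moreover have "\<forall>i. a i \<le> c i \<and> d i \<le> b i"
  proof
    fix i show "a i \<le> c i \<and> d i \<le> b i" using cell_lt[OF c, of i] unfolding c_def d_def by auto
  qed
  ultimately show ?thesis by blast
qed

lemma cell_parent:
  assumes s: "\<forall>i. sorted (K0 i)" and c: "cell K0 (Suc k) c d"
  shows "\<exists>a b. cell K0 k a b \<and> (\<forall>i. a i \<le> c i \<and> d i \<le> b i)"
proof -
  have "\<forall>i. \<exists>a b. span1 (set (lknots K0 k i)) a b \<and> a \<le> c i \<and> d i \<le> b"
    using refine_span_sub c unfolding cell_def set_lknots_Suc[OF s] by blast
  then obtain a b where "\<And>i. span1 (set (lknots K0 k i)) (a i) (b i) \<and> a i \<le> c i \<and> d i \<le> b i"
    by metis
  then show ?thesis unfolding cell_def by blast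
qed

lemma cell_ancestor:
  assumes s: "\<forall>i. sorted (K0 i)" and le: "k' \<le> k" and c: "cell K0 k c d"
  shows "\<exists>a b. cell K0 k' a b \<and> (\<forall>i. a i \<le> c i \<and> d i \<le> b i)"
  using le c
proof (induction k arbitrary: c d rule: dec_induct)
  case base then show ?case by blast
next
  case (step n)
  obtain a b where ab: "cell K0 n a b" "\<forall>i. a i \<le> c i \<and> d i \<le> b i" using cell_parent[OF s step.prems] by blast
  obtain a' b' where "cell K0 k' a' b'" "\<forall>i. a' i \<le> a i \<and> b i \<le> b' i" using step.IH[OF ab(1)] by blast
  then show ?case using ab by (meson order_trans)
qed

lemma cell_cover:
  assumes "\<forall>i. lo i \<in> set (lknots K0 k i) \<and> hi i \<in> set (lknots K0 k i) \<and> lo i < hi i" and x: "x \<in> rbox lo hi"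
  shows "\<exists>c d. cell K0 k c d \<and> x \<in> rbox c d \<and> (\<forall>i. lo i \<le> c i \<and> d i \<le> hi i)"
proof -
  have "\<forall>i. \<exists>c d. span1 (set (lknots K0 k i)) c d \<and> lo i \<le> c \<and> c \<le> x$i \<and> x$i \<le> d \<and> d \<le> hi i"
    using span_cover assms unfolding rbox_def by blast
  then obtain c d where "\<And>i. span1 (set (lknots K0 k i)) (c i) (d i) \<and> lo i \<le> c i \<and> c i \<le> x$i \<and> x$i \<le> d i \<and> d i \<le> hi i"
    by metis
  then show ?thesis unfolding cell_def rbox_def by blast
qed

lemma rbox_mono: "\<forall>i. a i \<le> c i \<and> d i \<le> b i \<Longrightarrow> rbox c d \<subseteq> rbox a b"
  unfolding rbox_def by (auto intro: order_trans)



lemma hd_anti: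
  assumes "hier_domains K0 Om" "k \<le> k'" shows "Om k' \<subseteq> Om k"
  using assms(2)
proof (induction k' rule: dec_induct)
  case base show ?case by simp
next
  case (step n) then show ?case using assms(1) unfolding hier_domains_def by blast
qed

lemma hd_empty: assumes "hier_domains K0 Om" shows "\<exists>M. \<forall>k\<ge>M. Om k = {}"
proof -
  obtain M where "Om M = {}" using assms unfolding hier_domains_def by blast
  then show ?thesis using hd_anti[OF assms] by blast
qed

lemma hd_union: "hier_domains K0 Om \<Longrightarrow> \<exists>S \<subseteq> cells_lv K0 k. Om (Suc k) = \<Union>S"
  unfolding hier_domains_def by blast

lemma mesh_cover:
  assumes s: "\<forall>i. sorted (K0 i)" and hd: "hier_domains K0 Om"
  shows "cell K0 k a b \<Longrightarrow> rbox a b \<subseteq> Om k \<Longrightarrow>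
    rbox a b \<subseteq> \<Union>{T. \<exists>k'. (k', T) \<in> hmesh_lv K0 Om \<and> T \<subseteq> rbox a b}"
proof -
  obtain M where M: "\<forall>k\<ge>M. Om k = {}" using hd_empty[OF hd] by blast
  have "\<forall>k a b. M - k \<le> n \<longrightarrow> cell K0 k a b \<longrightarrow> rbox a b \<subseteq> Om k \<longrightarrow>
    rbox a b \<subseteq> \<Union>{T. \<exists>k'. (k', T) \<in> hmesh_lv K0 Om \<and> T \<subseteq> rbox a b}" for n
  proof (induction n)
    case 0
    show ?case
    proof (intro allI impI)
      fix k a b assume "M - k \<le> 0" "cell K0 k a b" "rbox a b \<subseteq> Om k"
      then have "Om k = {}" using M by auto
      moreover have "(\<chi> i. a i) \<in> rbox a b" using cell_lt[OF \<open>cell K0 k a b\<close>] unfolding rbox_def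
        by (auto intro: less_imp_le)
      ultimately show "rbox a b \<subseteq> \<Union>{T. \<exists>k'. (k', T) \<in> hmesh_lv K0 Om \<and> T \<subseteq> rbox a b}"
        using \<open>rbox a b \<subseteq> Om k\<close> by auto
    qed
  next
    case (Suc n)
    show ?case
    proof (intro allI impI)
      fix k a b assume n: "M - k \<le> Suc n" and c: "cell K0 k a b" and sub: "rbox a b \<subseteq> Om k"
      show "rbox a b \<subseteq> \<Union>{T. \<exists>k'. (k', T) \<in> hmesh_lv K0 Om \<and> T \<subseteq> rbox a b}"
      proof (cases "rbox a b \<subseteq> Om (Suc k)")
        case False
        then have "(k, rbox a b) \<in> hmesh_lv K0 Om"
          unfolding hmesh_lv_def using sub c cells_lv_iff[OF s] by blast
        then show ?thesis by blast
      next
        case True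
        show ?thesis
        proof
          fix x assume x: "x \<in> rbox a b"
          obtain c' d' where cd: "cell K0 (Suc k) c' d'" "x \<in> rbox c' d'" "\<forall>i. a i \<le> c' i \<and> d' i \<le> b i"
            using cell_children[OF s c x] by blast
          have sub': "rbox c' d' \<subseteq> rbox a b" using rbox_mono[OF cd(3)] .
          have mn: "M - Suc k \<le> n" using n by auto
          have om: "rbox c' d' \<subseteq> Om (Suc k)" using sub' True by (rule order_trans)
          have "rbox c' d' \<subseteq> \<Union>{T. \<exists>k'. (k', T) \<in> hmesh_lv K0 Om \<and> T \<subseteq> rbox c' d'}"
            using Suc.IH[rule_format, OF mn cd(1) om] .
          then obtain T k' where T: "(k', T) \<in> hmesh_lv K0 Om" "T \<subseteq> rbox c' d'" "x \<in> T"
            using cd(2) by blast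
          have "T \<subseteq> rbox a b" using T(2) sub' by (rule order_trans)
          then show "x \<in> \<Union>{T. \<exists>k'. (k', T) \<in> hmesh_lv K0 Om \<and> T \<subseteq> rbox a b}"
            using T by blast
        qed
      qed
    qed
  qed
  from this[of "M - k"] show "cell K0 k a b \<Longrightarrow> rbox a b \<subseteq> Om k \<Longrightarrow>
    rbox a b \<subseteq> \<Union>{T. \<exists>k'. (k', T) \<in> hmesh_lv K0 Om \<and> T \<subseteq> rbox a b}" by blast
qed

lemma cell_in_Om:
  assumes s: "\<forall>i. sorted (K0 i)" and hd: "hier_domains K0 Om"
    and c: "cell K0 k a b" and lt: "\<forall>i. c i < d i" and sub: "rbox c d \<subseteq> rbox a b"
    and om: "rbox c d \<subseteq> Om (Suc k)"
  shows "rbox a b \<subseteq> Om (Suc k)"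
proof -
  obtain S where S: "S \<subseteq> cells_lv K0 k" "Om (Suc k) = \<Union>S" using hd_union[OF hd] by blast
  let ?z = "\<lambda>i. (c i + d i) / 2"
  have lt': "\<forall>i. c i \<le> d i" using lt less_imp_le by blast
  have ac: "\<forall>i. a i \<le> c i \<and> d i \<le> b i" using rbox_sub[OF lt' sub] by blast
  have "(\<chi> i. ?z i) \<in> rbox c d" unfolding rbox_def
  proof (intro CollectI allI)
    fix i show "c i \<le> (\<chi> i. ?z i)$i \<and> (\<chi> i. ?z i)$i \<le> d i" using lt'[rule_format, of i] by simp
  qed
  then obtain D where D: "D \<in> S" "(\<chi> i. ?z i) \<in> D" using om S by auto
  then obtain e f where ef: "cell K0 k e f" "D = rbox e f" using S cells_lv_iff[OF s] by blast
  have "a = e \<and> b = f"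
  proof (rule cell_center[OF c ef(1)])
    show "\<forall>i. a i < ?z i \<and> ?z i < b i"
    proof
      fix i have "a i \<le> c i" "d i \<le> b i" "c i < d i" using ac lt by auto
      then show "a i < ?z i \<and> ?z i < b i" by auto
    qed
    show "\<forall>i. e i \<le> ?z i \<and> ?z i \<le> f i" using D(2) ef(2) unfolding rbox_def by simp
  qed
  then show ?thesis using D S ef by auto
qed

lemma mesh_null:
  assumes s: "\<forall>i. sorted (K0 i)" and hd: "hier_domains K0 Om"
    and T: "(k, T) \<in> hmesh_lv K0 Om" and Y: "Y \<subseteq> Om (Suc k)"
  shows "emeasure lborel (Y \<inter> T) = 0"
proof -
  obtain S where S: "S \<subseteq> cells_lv K0 k" "Om (Suc k) = \<Union>S" using hd_union[OF hd] by blast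
  have Tc: "T \<in> cells_lv K0 k" "\<not> T \<subseteq> Om (Suc k)" using T unfolding hmesh_lv_def by auto
  then obtain a b where ab: "cell K0 k a b" "T = rbox a b" using cells_lv_iff[OF s] by blast
  let ?I = "Sigma UNIV (\<lambda>i. set (lknots K0 k i))"
  have "Y \<inter> T \<subseteq> (\<Union>ic\<in>?I. {x::real^'a. x$(fst ic) = snd ic})"
  proof
    fix x assume x: "x \<in> Y \<inter> T"
    then obtain D where D: "D \<in> S" "x \<in> D" using Y S by auto
    then obtain e f where ef: "cell K0 k e f" "D = rbox e f" using S cells_lv_iff[OF s] by blast
    have "D \<noteq> T" using Tc S D by auto
    then have "\<not> (a = e \<and> b = f)" using ab ef by auto
    then obtain i where i: "a i \<noteq> e i \<or> b i \<noteq> f i" by auto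
    have sa: "span1 (set (lknots K0 k i)) (a i) (b i)" using ab(1) unfolding cell_def by blast
    have se: "span1 (set (lknots K0 k i)) (e i) (f i)" using ef(1) unfolding cell_def by blast
    have "\<not> max (a i) (e i) < min (b i) (f i)"
    proof
      assume "max (a i) (e i) < min (b i) (f i)"
      from span_uniq[OF sa se this] i show False by auto
    qed
    moreover have "max (a i) (e i) \<le> x$i" "x$i \<le> min (b i) (f i)"
      using x D ab ef unfolding rbox_def by auto
    ultimately have "x$i = max (a i) (e i)" by auto
    moreover have "max (a i) (e i) \<in> set (lknots K0 k i)"
      using ab(1) ef(1) unfolding cell_def span1_def by (auto simp: max_def)
    ultimately show "x \<in> (\<Union>ic\<in>?I. {x::real^'a. x$(fst ic) = snd ic})"
      by (intro UN_I[of "(i, max (a i) (e i))"]) auto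
  qed
  then show ?thesis by (intro null_hyps[of ?I]) auto
qed

lemma mesh_cell_in_box:
  assumes s: "\<forall>i. sorted (K0 i)"
    and lh: "\<forall>i. lo i \<in> set (lknots K0 k i) \<and> hi i \<in> set (lknots K0 k i) \<and> lo i < hi i"
    and sub: "rbox lo hi \<subseteq> Om k" and nsub: "\<not> rbox lo hi \<subseteq> Om (Suc k)"
  shows "\<exists>C. (k, C) \<in> hmesh_lv K0 Om \<and> C \<subseteq> rbox lo hi"
proof -
  obtain x where x: "x \<in> rbox lo hi" "x \<notin> Om (Suc k)" using nsub by auto
  obtain c d where cd: "cell K0 k c d" "x \<in> rbox c d" "\<forall>i. lo i \<le> c i \<and> d i \<le> hi i"
    using cell_cover[OF lh x(1)] by blast
  have "rbox c d \<subseteq> rbox lo hi" using rbox_mono[OF cd(3)] .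
  moreover have "rbox c d \<in> cells_lv K0 k" using cells_lv_iff[OF s] cd(1) by blast
  ultimately have "(k, rbox c d) \<in> hmesh_lv K0 Om" unfolding hmesh_lv_def using sub x cd(2) by blast
  then show ?thesis using \<open>rbox c d \<subseteq> rbox lo hi\<close> by blast
qed

lemma bspline_box:
  assumes s: "\<forall>i. sorted (K0 i)" and b: "\<beta> \<in> bsplines_lv K0 p k" and ne: "supp \<beta> \<noteq> {}"
  obtains j where "\<beta> = tp_bspline (lknots K0 k) p j" "\<forall>i. j i + p i + 1 < length (lknots K0 k i)"
    "\<forall>i. lknots K0 k i ! (j i) < lknots K0 k i ! (j i + p i + 1)"
    "supp \<beta> = rbox (\<lambda>i. lknots K0 k i ! (j i)) (\<lambda>i. lknots K0 k i ! (j i + p i + 1))"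
proof -
  obtain j where j: "\<beta> = tp_bspline (lknots K0 k) p j" "\<forall>i. j i + p i + 1 < length (lknots K0 k i)"
    using b unfolding bsplines_lv_def by blast
  have sl: "\<forall>i. sorted (lknots K0 k i)" using sorted_lknots[OF s] by blast
  note E = supp_tp[OF sl j(2)]
  have lt: "\<forall>i. lknots K0 k i ! (j i) < lknots K0 k i ! (j i + p i + 1)"
  proof (rule ccontr)
    assume neg: "\<not> (\<forall>i. lknots K0 k i ! (j i) < lknots K0 k i ! (j i + p i + 1))"
    have "supp \<beta> = {}" unfolding j(1) E by (rule if_not_P[OF neg])
    with ne show False by simp
  qed
  have "supp \<beta> = rbox (\<lambda>i. lknots K0 k i ! (j i)) (\<lambda>i. lknots K0 k i ! (j i + p i + 1))"
    unfolding j(1) E by (rule if_P[OF lt])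
  then show ?thesis using that[OF j lt] by blast
qed



lemma adm_use:
  assumes "admissible K0 p Om" "(k, T) \<in> hmesh_lv K0 Om" "(k', T') \<in> hmesh_lv K0 Om"
    "\<beta> \<in> hbasis K0 p Om" "T \<subseteq> supp \<beta>" "T' \<subseteq> supp \<beta>"
  shows "\<bar>int k - int k'\<bar> \<le> 1"
  using assms unfolding admissible_def by fastforce

lemma prod_bound:
  fixes f :: "'d::finite \<Rightarrow> nat"
  assumes "\<And>i. f i \<le> c"
  shows "(\<Prod>i\<in>UNIV. f i) \<le> c ^ CARD('d)"
proof -
  have "(\<Prod>i\<in>UNIV. f i) \<le> (\<Prod>i\<in>(UNIV::'d set). c)" by (rule prod_mono) (use assms in auto)
  then show ?thesis by simp
qed

lemma card_Q:
  fixes K0 :: "'d::finite \<Rightarrow> real list"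
  assumes s: "\<forall>i. sorted (K0 i)" and j: "\<forall>i. j i + p i + 1 < length (lknots K0 k i)"
  defines "lo \<equiv> \<lambda>i. lknots K0 k i ! (j i)" and "hi \<equiv> \<lambda>i. lknots K0 k i ! (j i + p i + 1)"
  shows "finite {C. \<exists>c d. cell K0 (Suc k) c d \<and> C = rbox c d \<and> C \<subseteq> rbox lo hi}
    \<and> card {C. \<exists>c d. cell K0 (Suc k) c d \<and> C = rbox c d \<and> C \<subseteq> rbox lo hi} \<le> (\<Prod>i\<in>UNIV. 2 * (p i + 1))"
proof -
  let ?V' = "\<lambda>i. set (lknots K0 (Suc k) i)"
  let ?V = "\<lambda>i. set (lknots K0 k i)"
  let ?Q = "{C. \<exists>c d. cell K0 (Suc k) c d \<and> C = rbox c d \<and> C \<subseteq> rbox lo hi}"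
  let ?P = "PiE UNIV (\<lambda>i. ?V' i \<inter> {lo i..<hi i})"
  have sub: "?Q \<subseteq> (\<lambda>c. rbox c (\<lambda>i. nxt (?V' i) (c i))) ` ?P"
  proof
    fix C assume "C \<in> ?Q"
    then obtain c d where cd: "cell K0 (Suc k) c d" "C = rbox c d" "rbox c d \<subseteq> rbox lo hi" by blast
    have lt: "\<forall>i. c i < d i" using cell_lt[OF cd(1)] by blast
    then have le: "\<forall>i. c i \<le> d i" using less_imp_le by blast
    have bd: "\<forall>i. lo i \<le> c i \<and> d i \<le> hi i" using rbox_sub[OF le cd(3)] by blast
    have sp: "\<forall>i. span1 (?V' i) (c i) (d i)" using cd(1) unfolding cell_def by blast
    have "d = (\<lambda>i. nxt (?V' i) (c i))" using span_nxt sp by blast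
    moreover have "c \<in> ?P"
    proof -
      have "\<forall>i. c i \<in> ?V' i \<inter> {lo i..<hi i}"
      proof
        fix i
        have "c i \<in> ?V' i" using sp unfolding span1_def by blast
        moreover have "lo i \<le> c i" "c i < hi i" using bd lt by (auto intro: less_le_trans)
        ultimately show "c i \<in> ?V' i \<inter> {lo i..<hi i}" by auto
      qed
      then show ?thesis by auto
    qed
    ultimately show "C \<in> (\<lambda>c. rbox c (\<lambda>i. nxt (?V' i) (c i))) ` ?P" using cd(2) by blast
  qed
  have finP: "finite ?P" by (intro finite_PiE) auto
  have "card ?P = (\<Prod>i\<in>UNIV. card (?V' i \<inter> {lo i..<hi i}))" by (rule card_PiE) simp
  also have "\<dots> \<le> (\<Prod>i\<in>UNIV. 2 * (p i + 1))"
  proof (rule prod_mono)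
    fix i :: 'd
    have sl: "sorted (lknots K0 k i)" using sorted_lknots[OF s] by blast
    have "j i < length (lknots K0 k i)" using j[rule_format, of i] by auto
    then have loV: "lo i \<in> ?V i" unfolding lo_def by (rule nth_mem)
    have "card (?V' i \<inter> {lo i..<hi i}) \<le> 2 * card (?V i \<inter> {lo i..<hi i})"
      unfolding set_lknots_Suc[OF s] by (rule card_refine_interval[OF _ loV]) simp
    also have "\<dots> \<le> 2 * (p i + 1)"
      using card_knots_interval[OF sl, of "j i" "p i"] j unfolding lo_def hi_def by auto
    finally show "0 \<le> card (?V' i \<inter> {lo i..<hi i}) \<and> card (?V' i \<inter> {lo i..<hi i}) \<le> 2 * (p i + 1)" by simp
  qed
  finally have cP: "card ?P \<le> (\<Prod>i\<in>UNIV. 2 * (p i + 1))" .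
  have "finite ?Q" using sub finP by (meson finite_imageI finite_subset)
  moreover have "card ?Q \<le> card ?P"
    using card_mono[OF finite_imageI[OF finP] sub] card_image_le[OF finP, of "\<lambda>c. rbox c (\<lambda>i. nxt (?V' i) (c i))"]
    by linarith
  ultimately show ?thesis using cP by linarith
qed

lemma hmesh_ex: "T \<in> hmesh K0 Om \<Longrightarrow> \<exists>k. (k, T) \<in> hmesh_lv K0 Om"
  unfolding hmesh_def by force

lemma hmesh_I: "(k, T) \<in> hmesh_lv K0 Om \<Longrightarrow> T \<in> hmesh K0 Om"
  unfolding hmesh_def by force

lemma part1:
  fixes K0 :: "'d::finite \<Rightarrow> real list"
  assumes s: "\<forall>i. sorted (K0 i)" and hd: "hier_domains K0 Om" and adm: "admissible K0 p Om"
    and \<beta>: "\<beta> \<in> hbasis K0 p Om"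
  shows "\<exists>S \<subseteq> hmesh K0 Om. finite S \<and> card S \<le> (\<Prod>i\<in>UNIV. 2 * (p i + 1)) \<and> supp \<beta> = \<Union>S"
proof -
  obtain k where bk: "\<beta> \<in> bsplines_lv K0 p k" "supp \<beta> \<subseteq> Om k" "\<not> supp \<beta> \<subseteq> Om (Suc k)"
    using \<beta> unfolding hbasis_def by blast
  have ne: "supp \<beta> \<noteq> {}" using bk(3) by auto
  obtain j where j: "\<beta> = tp_bspline (lknots K0 k) p j" "\<forall>i. j i + p i + 1 < length (lknots K0 k i)"
    "\<forall>i. lknots K0 k i ! (j i) < lknots K0 k i ! (j i + p i + 1)"
    "supp \<beta> = rbox (\<lambda>i. lknots K0 k i ! (j i)) (\<lambda>i. lknots K0 k i ! (j i + p i + 1))"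
    using bspline_box[OF s bk(1) ne] by blast
  define lo where "lo = (\<lambda>i. lknots K0 k i ! (j i))"
  define hi where "hi = (\<lambda>i. lknots K0 k i ! (j i + p i + 1))"
  have supp: "supp \<beta> = rbox lo hi" using j(4) unfolding lo_def hi_def .
  have lh: "\<forall>i. lo i \<in> set (lknots K0 k i) \<and> hi i \<in> set (lknots K0 k i) \<and> lo i < hi i"
  proof
    fix i
    have "j i < length (lknots K0 k i)" "j i + p i + 1 < length (lknots K0 k i)" using j(2)[rule_format, of i] by auto
    then show "lo i \<in> set (lknots K0 k i) \<and> hi i \<in> set (lknots K0 k i) \<and> lo i < hi i"
      unfolding lo_def hi_def using j(3) by auto
  qed
  define S where "S = {T \<in> hmesh K0 Om. T \<subseteq> rbox lo hi}"
  have Ssub: "S \<subseteq> hmesh K0 Om" unfolding S_def by auto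
  have Sun: "supp \<beta> = \<Union>S"
  proof
    show "\<Union>S \<subseteq> supp \<beta>" unfolding S_def supp by auto
    show "supp \<beta> \<subseteq> \<Union>S"
    proof
      fix x assume "x \<in> supp \<beta>"
      then have x: "x \<in> rbox lo hi" using supp by simp
      obtain c d where cd: "cell K0 k c d" "x \<in> rbox c d" "\<forall>i. lo i \<le> c i \<and> d i \<le> hi i"
        using cell_cover[OF lh x] by blast
      have cdsub: "rbox c d \<subseteq> rbox lo hi" using rbox_mono[OF cd(3)] .
      then have "rbox c d \<subseteq> Om k" using bk(2) supp by simp
      then have "x \<in> \<Union>{T. \<exists>k'. (k', T) \<in> hmesh_lv K0 Om \<and> T \<subseteq> rbox c d}"
        using mesh_cover[OF s hd cd(1)] cd(2) by blast
      then obtain T k' where T: "(k', T) \<in> hmesh_lv K0 Om" "T \<subseteq> rbox c d" "x \<in> T" by blast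
      have "T \<in> S" unfolding S_def using hmesh_I[OF T(1)] T(2) cdsub by auto
      then show "x \<in> \<Union>S" using T(3) by blast
    qed
  qed
  obtain C0 where C0: "(k, C0) \<in> hmesh_lv K0 Om" "C0 \<subseteq> rbox lo hi"
  proof -
    have "rbox lo hi \<subseteq> Om k" "\<not> rbox lo hi \<subseteq> Om (Suc k)" using bk(2,3) supp by auto
    from mesh_cell_in_box[OF s lh this] show ?thesis using that by blast
  qed
  have lev: "k'' = k \<or> k'' = Suc k" if T: "T \<in> S" "(k'', T) \<in> hmesh_lv K0 Om" for T k''
  proof -
    have Tsub: "T \<subseteq> supp \<beta>" using T(1) supp unfolding S_def by auto
    have "\<bar>int k'' - int k\<bar> \<le> 1" using adm_use[OF adm T(2) C0(1) \<beta> Tsub] C0(2) supp by auto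
    moreover have "k \<le> k''"
    proof (rule ccontr)
      assume "\<not> k \<le> k''"
      then have "Om k \<subseteq> Om (Suc k'')" using hd_anti[OF hd, of "Suc k''" k] by auto
      then have "T \<subseteq> Om (Suc k'')" using Tsub bk(2) by auto
      then show False using T(2) unfolding hmesh_lv_def by auto
    qed
    ultimately show ?thesis by auto
  qed
  define lv where "lv T = (SOME k''. (k'', T) \<in> hmesh_lv K0 Om)" for T
  have lvI: "(lv T, T) \<in> hmesh_lv K0 Om" if "T \<in> S" for T
  proof -
    have "\<exists>k''. (k'', T) \<in> hmesh_lv K0 Om" using hmesh_ex that unfolding S_def by blast
    then show ?thesis unfolding lv_def by (rule someI_ex)
  qed
  have lvk: "lv T = k \<or> lv T = Suc k" if "T \<in> S" for T using lev[OF that lvI[OF that]] .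
  have cellT: "\<exists>a b. cell K0 l a b \<and> T = rbox a b" if "T \<in> S" "lv T = l" for T l
    using lvI[OF that(1)] that(2) cells_lv_iff[OF s] unfolding hmesh_lv_def by blast
  define ch where "ch T = (SOME C. \<exists>c d. cell K0 (Suc k) c d \<and> C = rbox c d \<and> C \<subseteq> T)" for T
  have chI: "\<exists>c d. cell K0 (Suc k) c d \<and> ch T = rbox c d \<and> ch T \<subseteq> T" if TT: "T \<in> S" "lv T = k" for T
  proof -
    obtain a b where ab: "cell K0 k a b" "T = rbox a b" using cellT[OF TT] by blast
    have "(\<chi> i. a i) \<in> rbox a b" using cell_lt[OF ab(1)] unfolding rbox_def by (auto intro: less_imp_le)
    then obtain c d where cd: "cell K0 (Suc k) c d" "\<forall>i. a i \<le> c i \<and> d i \<le> b i"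
      using cell_children[OF s ab(1)] by blast
    have "rbox c d \<subseteq> T" using rbox_mono[OF cd(2)] ab(2) by simp
    then have "\<exists>C. \<exists>c d. cell K0 (Suc k) c d \<and> C = rbox c d \<and> C \<subseteq> T" using cd(1) by blast
    then show ?thesis unfolding ch_def by (rule someI_ex)
  qed
  define f where "f T = (if lv T = k then ch T else T)" for T
  define Q where "Q = {C. \<exists>c d. cell K0 (Suc k) c d \<and> C = rbox c d \<and> C \<subseteq> rbox lo hi}"
  have fQ: "f ` S \<subseteq> Q"
  proof
    fix C assume "C \<in> f ` S"
    then obtain T where T: "T \<in> S" "C = f T" by blast
    have Tb: "T \<subseteq> rbox lo hi" using T(1) unfolding S_def by auto
    show "C \<in> Q"
    proof (cases "lv T = k")
      case True
      then obtain c d where cd: "cell K0 (Suc k) c d" "ch T = rbox c d" "ch T \<subseteq> T" using chI[OF T(1)] by blast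
      have "C = rbox c d" using T(2) True cd(2) unfolding f_def by simp
      moreover have "rbox c d \<subseteq> rbox lo hi" using cd(2,3) Tb by auto
      ultimately show ?thesis using cd(1) unfolding Q_def by blast
    next
      case False
      then have "lv T = Suc k" using lvk[OF T(1)] by auto
      then obtain c d where cd: "cell K0 (Suc k) c d" "T = rbox c d" using cellT[OF T(1)] by blast
      have "C = rbox c d" using T(2) False cd(2) unfolding f_def by simp
      then show ?thesis using cd Tb unfolding Q_def by blast
    qed
  qed
  have key: "ch T1 \<noteq> T2" if T: "T1 \<in> S" "T2 \<in> S" "lv T1 = k" "lv T2 \<noteq> k" for T1 T2
  proof
    assume eq: "ch T1 = T2"
    have "lv T2 = Suc k" using lvk[OF T(2)] T(4) by auto
    then have om: "T2 \<subseteq> Om (Suc k)" using lvI[OF T(2)] unfolding hmesh_lv_def by auto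
    obtain c d where cd: "cell K0 (Suc k) c d" "ch T1 = rbox c d" "ch T1 \<subseteq> T1" using chI[OF T(1,3)] by blast
    obtain a b where ab: "cell K0 k a b" "T1 = rbox a b" using cellT[OF T(1,3)] by blast
    have "rbox a b \<subseteq> Om (Suc k)"
      by (rule cell_in_Om[OF s hd ab(1), of c d]) (use cell_lt[OF cd(1)] cd ab om eq in auto)
    then show False using lvI[OF T(1)] T(3) ab(2) unfolding hmesh_lv_def by auto
  qed
  have inj: "inj_on f S"
  proof (rule inj_onI)
    fix T1 T2 assume T: "T1 \<in> S" "T2 \<in> S" "f T1 = f T2"
    show "T1 = T2"
    proof (cases "lv T1 = k"; cases "lv T2 = k")
      assume k1: "lv T1 = k" and k2: "lv T2 = k"
      then have eq: "ch T1 = ch T2" using T(3) unfolding f_def by simp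
      obtain c d where cd: "cell K0 (Suc k) c d" "ch T1 = rbox c d" "ch T1 \<subseteq> T1" using chI[OF T(1) k1] by blast
      have c2: "ch T2 \<subseteq> T2" using chI[OF T(2) k2] by blast
      obtain a b where ab: "cell K0 k a b" "T1 = rbox a b" using cellT[OF T(1) k1] by blast
      obtain e g where eg: "cell K0 k e g" "T2 = rbox e g" using cellT[OF T(2) k2] by blast
      have lt: "\<forall>i. c i < d i" using cell_lt[OF cd(1)] by blast
      then have le: "\<forall>i. c i \<le> d i" using less_imp_le by blast
      have bd: "\<forall>i. a i \<le> c i \<and> d i \<le> b i" using rbox_sub[OF le] cd(2,3) ab(2) by metis
      let ?z = "\<lambda>i. (c i + d i) / 2"
      have zin: "(\<chi> i. ?z i) \<in> rbox c d" unfolding rbox_def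
      proof (intro CollectI allI)
        fix i show "c i \<le> (\<chi> i. ?z i)$i \<and> (\<chi> i. ?z i)$i \<le> d i" using le[rule_format, of i] by simp
      qed
      have "a = e \<and> b = g"
      proof (rule cell_center[OF ab(1) eg(1)])
        show "\<forall>i. a i < ?z i \<and> ?z i < b i"
        proof
          fix i have "a i \<le> c i" "d i \<le> b i" "c i < d i" using bd lt by auto
          then show "a i < ?z i \<and> ?z i < b i" by auto
        qed
        have "(\<chi> i. ?z i) \<in> rbox e g" using zin cd(2) eq c2 eg(2) by auto
        then show "\<forall>i. e i \<le> ?z i \<and> ?z i \<le> g i" unfolding rbox_def by simp
      qed
      then show ?thesis using ab eg by simp
    next
      assume k1: "lv T1 = k" and k2: "lv T2 \<noteq> k"
      then show ?thesis using key[OF T(1,2) k1 k2] T(3) unfolding f_def by simp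
    next
      assume k1: "lv T1 \<noteq> k" and k2: "lv T2 = k"
      then show ?thesis using key[OF T(2,1) k2 k1] T(3) unfolding f_def by simp
    next
      assume k1: "lv T1 \<noteq> k" and k2: "lv T2 \<noteq> k"
      then show ?thesis using T(3) unfolding f_def by simp
    qed
  qed
  have cQ: "finite Q \<and> card Q \<le> (\<Prod>i\<in>UNIV. 2 * (p i + 1))"
    using card_Q[OF s j(2)] unfolding Q_def lo_def hi_def .
  have finS: "finite S"
    using finite_imageD[OF finite_subset[OF fQ] inj] cQ by blast
  have "card S = card (f ` S)" using card_image[OF inj] by simp
  also have "\<dots> \<le> card Q" using card_mono[OF _ fQ] cQ by blast
  finally have "card S \<le> (\<Prod>i\<in>UNIV. 2 * (p i + 1))" using cQ by linarith
  then show ?thesis using Ssub finS Sun by blast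
qed



lemma part2:
  fixes K0 :: "'d::finite \<Rightarrow> real list"
  assumes s: "\<forall>i. sorted (K0 i)" and hd: "hier_domains K0 Om" and adm: "admissible K0 p Om"
    and T: "T \<in> hmesh K0 Om"
  shows "finite {\<beta>' \<in> hbasis K0 p Om. emeasure lborel (supp \<beta>' \<inter> T) > 0} \<and>
     card {\<beta>' \<in> hbasis K0 p Om. emeasure lborel (supp \<beta>' \<inter> T) > 0} \<le> 2 * (\<Prod>i\<in>UNIV. p i + 1)"
proof -
  obtain k where kT: "(k, T) \<in> hmesh_lv K0 Om" using hmesh_ex[OF T] by blast
  then have "T \<in> cells_lv K0 k" unfolding hmesh_lv_def by auto
  then obtain a b where ab: "cell K0 k a b" "T = rbox a b" using cells_lv_iff[OF s] by blast
  define N where "N l i = {m. m + p i + 1 < length (lknots K0 l i) \<and> lknots K0 l i ! m < b i \<and> a i < lknots K0 l i ! (m + p i + 1)}" for l i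
  define J where "J l = PiE UNIV (N l)" for l
  have NJ: "finite (J l) \<and> card (J l) \<le> (\<Prod>i\<in>UNIV. p i + 1)" if lk: "l \<le> k" for l
  proof -
    obtain a' b' where ab': "cell K0 l a' b'" "\<forall>i. a' i \<le> a i \<and> b i \<le> b' i"
      using cell_ancestor[OF s lk ab(1)] by blast
    have Ni: "finite (N l i) \<and> card (N l i) \<le> p i + 1" for i
    proof -
      have sp: "span1 (set (lknots K0 l i)) (a' i) (b' i)" using ab'(1) unfolding cell_def by blast
      have le: "a' i \<le> a i" "b i \<le> b' i" using ab'(2) by auto
      show ?thesis using card_overlap_index[OF sorted_lknots[OF s] sp le, of "p i"] unfolding N_def by blast
    qed
    have "finite (J l)" unfolding J_def using Ni by (intro finite_PiE) auto
    moreover have "card (J l) = (\<Prod>i\<in>UNIV. card (N l i))" unfolding J_def by (rule card_PiE) simp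
    moreover have "(\<Prod>i\<in>UNIV. card (N l i)) \<le> (\<Prod>i\<in>UNIV. p i + 1)"
      by (rule prod_mono) (use Ni in auto)
    ultimately show ?thesis by simp
  qed
  let ?F = "{\<beta>' \<in> hbasis K0 p Om. emeasure lborel (supp \<beta>' \<inter> T) > 0}"
  have Fsub: "?F \<subseteq> tp_bspline (lknots K0 (k - 1)) p ` J (k - 1) \<union> tp_bspline (lknots K0 k) p ` J k"
  proof
    fix \<beta>' assume "\<beta>' \<in> ?F"
    then have \<beta>': "\<beta>' \<in> hbasis K0 p Om" and pos: "emeasure lborel (supp \<beta>' \<inter> T) > 0" by auto
    obtain k' where bk: "\<beta>' \<in> bsplines_lv K0 p k'" "supp \<beta>' \<subseteq> Om k'" "\<not> supp \<beta>' \<subseteq> Om (Suc k')"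
      using \<beta>' unfolding hbasis_def by blast
    have ne: "supp \<beta>' \<noteq> {}" using bk(3) by auto
    obtain j where j: "\<beta>' = tp_bspline (lknots K0 k') p j" "\<forall>i. j i + p i + 1 < length (lknots K0 k' i)"
      "\<forall>i. lknots K0 k' i ! (j i) < lknots K0 k' i ! (j i + p i + 1)"
      "supp \<beta>' = rbox (\<lambda>i. lknots K0 k' i ! (j i)) (\<lambda>i. lknots K0 k' i ! (j i + p i + 1))"
      using bspline_box[OF s bk(1) ne] by blast
    define lo where "lo = (\<lambda>i. lknots K0 k' i ! (j i))"
    define hi where "hi = (\<lambda>i. lknots K0 k' i ! (j i + p i + 1))"
    have supp: "supp \<beta>' = rbox lo hi" using j(4) unfolding lo_def hi_def .
    have lh: "\<forall>i. lo i \<in> set (lknots K0 k' i) \<and> hi i \<in> set (lknots K0 k' i) \<and> lo i < hi i"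
    proof
      fix i
      have "j i < length (lknots K0 k' i)" "j i + p i + 1 < length (lknots K0 k' i)" using j(2)[rule_format, of i] by auto
      then show "lo i \<in> set (lknots K0 k' i) \<and> hi i \<in> set (lknots K0 k' i) \<and> lo i < hi i"
        unfolding lo_def hi_def using j(3) by auto
    qed
    have kk: "k' \<le> k"
    proof (rule ccontr)
      assume "\<not> k' \<le> k"
      then have "Om k' \<subseteq> Om (Suc k)" using hd_anti[OF hd, of "Suc k" k'] by auto
      then have "supp \<beta>' \<subseteq> Om (Suc k)" using bk(2) by auto
      then have "emeasure lborel (supp \<beta>' \<inter> T) = 0" by (rule mesh_null[OF s hd kT])
      then show False using pos by simp
    qed
    have ov: "lo i < b i \<and> a i < hi i" for i
    proof (rule ccontr)
      assume nov: "\<not> (lo i < b i \<and> a i < hi i)"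
      have "supp \<beta>' \<inter> T \<subseteq> rbox (\<lambda>i. max (lo i) (a i)) (\<lambda>i. min (hi i) (b i))"
        using supp ab(2) rbox_Int[of lo hi a b] by simp
      moreover have "min (hi i) (b i) \<le> max (lo i) (a i)" using nov by auto
      ultimately have "emeasure lborel (supp \<beta>' \<inter> T) = 0" by (rule null_rbox)
      then show False using pos by simp
    qed
    obtain a' b' where ab': "cell K0 k' a' b'" "\<forall>i. a' i \<le> a i \<and> b i \<le> b' i"
      using cell_ancestor[OF s kk ab(1)] by blast
    have bnd: "lo i \<le> a' i \<and> b' i \<le> hi i" for i
    proof -
      have sp: "span1 (set (lknots K0 k' i)) (a' i) (b' i)" using ab'(1) unfolding cell_def by blast
      have "lo i < b' i" "a' i < hi i" using ov[of i] ab'(2) by (auto intro: less_le_trans le_less_trans)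
      then show ?thesis using sp lh unfolding span1_def by force
    qed
    have Tsub: "T \<subseteq> supp \<beta>'"
    proof -
      have "rbox a b \<subseteq> rbox a' b'" using rbox_mono ab'(2) by blast
      moreover have "rbox a' b' \<subseteq> rbox lo hi" using rbox_mono bnd by blast
      ultimately show ?thesis using ab(2) supp by auto
    qed
    obtain C0 where C0: "(k', C0) \<in> hmesh_lv K0 Om" "C0 \<subseteq> rbox lo hi"
    proof -
      have "rbox lo hi \<subseteq> Om k'" "\<not> rbox lo hi \<subseteq> Om (Suc k')" using bk(2,3) supp by auto
      from mesh_cell_in_box[OF s lh this] show ?thesis using that by blast
    qed
    have "\<bar>int k - int k'\<bar> \<le> 1" using adm_use[OF adm kT C0(1) \<beta>' Tsub] C0(2) supp by auto
    then have kk': "k' = k \<or> k' = k - 1" using kk by auto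
    have "j \<in> J k'" unfolding J_def N_def using j(2) ov unfolding lo_def hi_def by auto
    then show "\<beta>' \<in> tp_bspline (lknots K0 (k - 1)) p ` J (k - 1) \<union> tp_bspline (lknots K0 k) p ` J k"
      using kk' j(1) by auto
  qed
  have f1: "finite (J (k - 1))" "card (J (k - 1)) \<le> (\<Prod>i\<in>UNIV. p i + 1)" using NJ[of "k - 1"] by auto
  have f2: "finite (J k)" "card (J k) \<le> (\<Prod>i\<in>UNIV. p i + 1)" using NJ[of k] by auto
  let ?U = "tp_bspline (lknots K0 (k - 1)) p ` J (k - 1) \<union> tp_bspline (lknots K0 k) p ` J k"
  have finU: "finite ?U" using f1 f2 by auto
  have "card ?F \<le> card ?U" using card_mono[OF finU Fsub] .
  also have "\<dots> \<le> card (tp_bspline (lknots K0 (k - 1)) p ` J (k - 1)) + card (tp_bspline (lknots K0 k) p ` J k)"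
    by (rule card_Un_le)
  also have "\<dots> \<le> card (J (k - 1)) + card (J k)" using card_image_le f1 f2 by (meson add_mono)
  also have "\<dots> \<le> 2 * (\<Prod>i\<in>UNIV. p i + 1)" using f1 f2 by simp
  finally show ?thesis using finite_subset[OF Fsub finU] by blast
qed


theorem proposition3p3:
  fixes K0 :: "'d::finite \<Rightarrow> real list"
    and p :: "'d \<Rightarrow> nat"
    and Om :: "nat \<Rightarrow> (real^'d) set"
  assumes "CARD('d) \<ge> 2"
    and "\<And>i. p i \<ge> 1"
    and "\<And>i. open_knot_vector (p i) (K0 i)"
    and "hier_domains K0 Om"
    and "admissible K0 p Om"
  shows "(\<forall>\<beta> \<in> hbasis K0 p Om. \<exists>S \<subseteq> hmesh K0 Om. finite S \<and>
            card S \<le> 2 ^ CARD('d) * (Max (range p) + 1) ^ CARD('d) \<and> supp \<beta> = \<Union>S)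
       \<and> (\<forall>T \<in> hmesh K0 Om.
            finite {\<beta>' \<in> hbasis K0 p Om. emeasure lborel (supp \<beta>' \<inter> T) > 0} \<and>
            card {\<beta>' \<in> hbasis K0 p Om. emeasure lborel (supp \<beta>' \<inter> T) > 0}
              \<le> 2 * (Max (range p) + 1) ^ CARD('d))"
proof -
  have s: "\<forall>i. sorted (K0 i)" using assms(3) unfolding open_knot_vector_def by blast
  have pM: "p i \<le> Max (range p)" for i by (rule Max_ge) auto
  have b1: "(\<Prod>i\<in>UNIV. 2 * (p i + 1)) \<le> 2 ^ CARD('d) * (Max (range p) + 1) ^ CARD('d)"
  proof -
    have h: "(\<Prod>i\<in>UNIV. 2 * (p i + 1)) \<le> (2 * (Max (range p) + 1)) ^ CARD('d)"
      by (rule prod_bound) (use pM in auto)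
    have eq: "(2 * (Max (range p) + 1)) ^ CARD('d) = 2 ^ CARD('d) * (Max (range p) + 1) ^ CARD('d)"
      by (rule power_mult_distrib)
    show ?thesis using h unfolding eq .
  qed
  have b2: "(\<Prod>i\<in>UNIV. p i + 1) \<le> (Max (range p) + 1) ^ CARD('d)"
    by (rule prod_bound) (use pM in auto)
  show ?thesis
  proof (intro conjI ballI)
    fix \<beta> assume "\<beta> \<in> hbasis K0 p Om"
    from part1[OF s assms(4,5) this] b1
    show "\<exists>S \<subseteq> hmesh K0 Om. finite S \<and>
            card S \<le> 2 ^ CARD('d) * (Max (range p) + 1) ^ CARD('d) \<and> supp \<beta> = \<Union>S"
      by (meson order_trans)
  next
    fix T assume T: "T \<in> hmesh K0 Om"
    note P2 = part2[OF s assms(4,5) T]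
    show "finite {\<beta>' \<in> hbasis K0 p Om. emeasure lborel (supp \<beta>' \<inter> T) > 0}" using P2 by blast
    show "card {\<beta>' \<in> hbasis K0 p Om. emeasure lborel (supp \<beta>' \<inter> T) > 0}
              \<le> 2 * (Max (range p) + 1) ^ CARD('d)" using P2 b2 by linarith
  qed
qed

end
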